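(* Let $M$ be a matroid on $E$ and let $(M_1,\dots,M_d)$ be a $d$-th symmetric power of $M$. Then for every flat $F$ of $M$, the set $F\cdot\mathrm{Sym}_{d-1}(E)$ is a flat of $M_d$.
   Context: $\mathrm{Sym}_d(E)$: multisets of size $d$ from $E$, written multiplicatively, $\mathrm{Sym}_0(E)=\{1\}$; $F\cdot\mathrm{Sym}_{d-1}(E)$ is the set of elements of $\mathrm{Sym}_d(E)$ containing at least one element of $F$. For $\alpha\in\mathrm{Sym}_{d-i}(E)$ and a matroid $N$ on $\mathrm{Sym}_d(E)$, $N|_\alpha$ is the restriction to $\{\alpha\beta:\beta\in\mathrm{Sym}_i(E)\}$. A $d$-th symmetric quasi power of $M$ is a sequence $(M_1,\dots,M_d)$ of matroids, $M_1=M$, $M_i$ on $\mathrm{Sym}_i(E)$, such that for every $1\le i\le d$ and $\alpha\in\mathrm{Sym}_{d-i}(E)$: if no element of $\alpha$ is a loop of $M$, $\beta\mapsto\alpha\beta$ is an isomorphism $M_i\cong M_d|_\alpha$; otherwise $\mathrm{rk}(M_d|_\alpha)=0$. It is a $d$-th symmetric power if also $\mathrm{rk}(M_d)=\binom{\mathrm{rk}(M)+d-1}{d}$. *)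

theory Defs
  imports Main "HOL-Library.Multiset"
begin

definition matroid :: "'a set \<Rightarrow> ('a set \<Rightarrow> bool) \<Rightarrow> bool" where
  "matroid E indep \<longleftrightarrow>
     finite E \<and> indep {} \<and>
     (\<forall>X. indep X \<longrightarrow> X \<subseteq> E) \<and>
     (\<forall>X Y. indep X \<and> Y \<subseteq> X \<longrightarrow> indep Y) \<and>
     (\<forall>X Y. indep X \<and> indep Y \<and> card X < card Y \<longrightarrow>
        (\<exists>y\<in>Y - X. indep (insert y X)))"

definition rk :: "('a set \<Rightarrow> bool) \<Rightarrow> 'a set \<Rightarrow> nat" where
  "rk indep X = Max {card I | I. I \<subseteq> X \<and> indep I}"

definition flat :: "'a set \<Rightarrow> ('a set \<Rightarrow> bool) \<Rightarrow> 'a set \<Rightarrow> bool" where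
  "flat E indep F \<longleftrightarrow> F \<subseteq> E \<and> (\<forall>e\<in>E - F. rk indep (insert e F) > rk indep F)"

definition loop :: "'a set \<Rightarrow> ('a set \<Rightarrow> bool) \<Rightarrow> 'a \<Rightarrow> bool" where
  "loop E indep e \<longleftrightarrow> e \<in> E \<and> \<not> indep {e}"

definition restr :: "('a set \<Rightarrow> bool) \<Rightarrow> 'a set \<Rightarrow> 'a set \<Rightarrow> bool" where
  "restr indep S = (\<lambda>X. indep X \<and> X \<subseteq> S)"

definition matroid_iso ::
  "('a \<Rightarrow> 'b) \<Rightarrow> 'a set \<Rightarrow> ('a set \<Rightarrow> bool) \<Rightarrow> 'b set \<Rightarrow> ('b set \<Rightarrow> bool) \<Rightarrow> bool" where
  "matroid_iso f E1 indep1 E2 indep2 \<longleftrightarrow>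
     bij_betw f E1 E2 \<and> (\<forall>X. X \<subseteq> E1 \<longrightarrow> (indep1 X \<longleftrightarrow> indep2 (f ` X)))"

text \<open>Sym_d(E): multisets of size d with elements in E; product is multiset sum.\<close>
definition Sym :: "nat \<Rightarrow> 'a set \<Rightarrow> 'a multiset set" where
  "Sym d E = {m. set_mset m \<subseteq> E \<and> size m = d}"

text \<open>F . Sym_{d-1}(E): elements of Sym_d(E) containing some element of F.\<close>
definition FSym :: "'a set \<Rightarrow> nat \<Rightarrow> 'a set \<Rightarrow> 'a multiset set" where
  "FSym F d E = {m \<in> Sym d E. \<exists>x\<in>F. x \<in># m}"

text \<open>Ms i is the independence predicate of M_i on ground set Sym_i(E), 1 \<le> i \<le> d.
  M_1 = M is understood via the identification e \<leftrightarrow> {#e#}.\<close>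
definition sym_quasi_power ::
  "'a set \<Rightarrow> ('a set \<Rightarrow> bool) \<Rightarrow> nat \<Rightarrow> (nat \<Rightarrow> 'a multiset set \<Rightarrow> bool) \<Rightarrow> bool" where
  "sym_quasi_power E indep d Ms \<longleftrightarrow>
     (\<forall>i\<in>{1..d}. matroid (Sym i E) (Ms i)) \<and>
     matroid_iso (\<lambda>e. {#e#}) E indep (Sym 1 E) (Ms 1) \<and>
     (\<forall>i\<in>{1..d}. \<forall>\<alpha>\<in>Sym (d - i) E.
        let S = {\<alpha> + \<beta> | \<beta>. \<beta> \<in> Sym i E} in
        (if (\<forall>a\<in>#\<alpha>. \<not> loop E indep a)
         then matroid_iso (\<lambda>\<beta>. \<alpha> + \<beta>) (Sym i E) (Ms i) S (restr (Ms d) S)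
         else rk (Ms d) S = 0))"

definition sym_power ::
  "'a set \<Rightarrow> ('a set \<Rightarrow> bool) \<Rightarrow> nat \<Rightarrow> (nat \<Rightarrow> 'a multiset set \<Rightarrow> bool) \<Rightarrow> bool" where
  "sym_power E indep d Ms \<longleftrightarrow>
     sym_quasi_power E indep d Ms \<and>
     rk (Ms d) (Sym d E) = (rk indep E + d - 1) choose d"

end

theory Submission
  imports Defs
begin

lemma Sym_eq: "Sym d E = multisets_of_size E d"
  by (simp add: Sym_def multisets_of_size_def)

lemma finite_Sym: "finite E \<Longrightarrow> finite (Sym d E)"
  by (simp add: Sym_eq finite_multisets_of_size)

lemma card_Sym: "finite E \<Longrightarrow> card (Sym d E) = (card E + d - 1) choose d"
  by (simp add: Sym_eq card_multisets_of_size)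

locale mat =
  fixes E :: "'a set" and indep :: "'a set \<Rightarrow> bool"
  assumes m: "matroid E indep"
begin

lemma finE: "finite E" using m by (simp add: matroid_def)
lemma indep_empty: "indep {}" using m by (simp add: matroid_def)
lemma indep_sub: "indep X \<Longrightarrow> X \<subseteq> E" using m by (simp add: matroid_def)
lemma indep_subset: "indep X \<Longrightarrow> Y \<subseteq> X \<Longrightarrow> indep Y" using m unfolding matroid_def by blast
lemma augment: "indep X \<Longrightarrow> indep Y \<Longrightarrow> card X < card Y \<Longrightarrow> \<exists>y\<in>Y - X. indep (insert y X)"
  using m unfolding matroid_def by blast
lemma indep_finite: "indep X \<Longrightarrow> finite X" using indep_sub finE finite_subset by blast

lemma cards_finite: "finite {card I | I. I \<subseteq> X \<and> indep I}"
proof -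
  have "{card I | I. I \<subseteq> X \<and> indep I} \<subseteq> {0..card E}"
    using indep_sub finE card_mono by fastforce
  then show ?thesis using finite_subset by blast
qed

lemma cards_ne: "{card I | I. I \<subseteq> X \<and> indep I} \<noteq> {}"
  using indep_empty by blast

lemma rk_ge: "indep I \<Longrightarrow> I \<subseteq> X \<Longrightarrow> card I \<le> rk indep X"
  unfolding rk_def by (rule Max_ge[OF cards_finite]) blast

lemma rk_ex: "\<exists>I. I \<subseteq> X \<and> indep I \<and> card I = rk indep X"
proof -
  have "rk indep X \<in> {card I | I. I \<subseteq> X \<and> indep I}"
    unfolding rk_def by (rule Max_in[OF cards_finite cards_ne])
  then obtain I where "I \<subseteq> X" "indep I" "card I = rk indep X" by auto
  then show ?thesis by auto
qed

lemma rk_le_card: assumes "finite X" shows "rk indep X \<le> card X"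
proof -
  obtain I where "I \<subseteq> X" "indep I" "card I = rk indep X" using rk_ex[of X] by blast
  then show ?thesis using card_mono[OF assms] by metis
qed

lemma rk_mono: assumes "X \<subseteq> Y" shows "rk indep X \<le> rk indep Y"
proof -
  obtain I where "I \<subseteq> X" "indep I" "card I = rk indep X" using rk_ex[of X] by blast
  then show ?thesis using rk_ge[of I Y] assms by (metis subset_trans)
qed

lemma rk_indep: assumes "indep I" shows "rk indep I = card I"
proof -
  have "card I \<le> rk indep I" using rk_ge[OF assms] by simp
  moreover have "rk indep I \<le> card I" using rk_le_card indep_finite[OF assms] by simp
  ultimately show ?thesis by simp
qed

lemma rk_card_indep: assumes "finite X" "rk indep X = card X" shows "indep X"
proof -
  obtain I where "I \<subseteq> X" "indep I" "card I = rk indep X" using rk_ex by blast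
  then have "I = X" using assms card_subset_eq by metis
  then show ?thesis using \<open>indep I\<close> by simp
qed

lemma extend: assumes "indep I" "I \<subseteq> X"
  shows "\<exists>J. I \<subseteq> J \<and> J \<subseteq> X \<and> indep J \<and> card J = rk indep X"
  using assms
proof (induction "rk indep X - card I" arbitrary: I rule: less_induct)
  case less
  show ?case
  proof (cases "card I < rk indep X")
    case True
    obtain K where K: "K \<subseteq> X" "indep K" "card K = rk indep X" using rk_ex by blast
    then obtain y where y: "y \<in> K - I" "indep (insert y I)" using augment[of I K] less.prems True by auto
    have fi: "finite I" using indep_finite less.prems by blast
    have "card (insert y I) = Suc (card I)" using y fi by simp
    then obtain J where "insert y I \<subseteq> J \<and> J \<subseteq> X \<and> indep J \<and> card J = rk indep X"
      using less.hyps[of "insert y I"] True y K less.prems by fastforce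
    then show ?thesis by blast
  next
    case False
    then show ?thesis using rk_ge[OF less.prems] less.prems by (intro exI[of _ I]) auto
  qed
qed

lemma submod: "rk indep (X \<union> Y) + rk indep (X \<inter> Y) \<le> rk indep X + rk indep Y"
proof -
  obtain J where J: "J \<subseteq> X \<inter> Y" "indep J" "card J = rk indep (X \<inter> Y)" using rk_ex by blast
  obtain K where K: "J \<subseteq> K" "K \<subseteq> X \<union> Y" "indep K" "card K = rk indep (X \<union> Y)"
    using extend[of J "X \<union> Y"] J by blast
  have fK: "finite K" using indep_finite K by blast
  have "card J \<le> card (K \<inter> X \<inter> Y)" using J K fK by (intro card_mono) auto
  moreover have "card (K \<inter> X) + card (K \<inter> Y) = card K + card (K \<inter> X \<inter> Y)"
  proof -
    have "K = (K \<inter> X) \<union> (K \<inter> Y)" using K by blast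
    then have "card K = card ((K \<inter> X) \<union> (K \<inter> Y))" by simp
    moreover have "(K \<inter> X) \<inter> (K \<inter> Y) = K \<inter> X \<inter> Y" by blast
    ultimately show ?thesis using card_Un_Int[of "K \<inter> X" "K \<inter> Y"] fK by simp
  qed
  moreover have "card (K \<inter> X) \<le> rk indep X" using K by (intro rk_ge) (auto intro: indep_subset)
  moreover have "card (K \<inter> Y) \<le> rk indep Y" using K by (intro rk_ge) (auto intro: indep_subset)
  ultimately show ?thesis using J K by linarith
qed

definition clm :: "'a \<Rightarrow> 'a set \<Rightarrow> bool" where
  "clm a Y \<longleftrightarrow> rk indep (insert a Y) = rk indep Y"

lemma clm_mem: "a \<in> Y \<Longrightarrow> clm a Y"
  by (simp add: clm_def insert_absorb)

lemma clm_mono: assumes "clm a A" "A \<subseteq> W" shows "clm a W"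
proof -
  have "rk indep (insert a W) + rk indep (W \<inter> insert a A) \<le> rk indep W + rk indep (insert a A)"
  proof -
    have "W \<union> insert a A = insert a W" using assms(2) by blast
    then show ?thesis using submod[of W "insert a A"] by simp
  qed
  moreover have "rk indep A \<le> rk indep (W \<inter> insert a A)" using assms by (intro rk_mono) auto
  moreover have "rk indep W \<le> rk indep (insert a W)" by (intro rk_mono) auto
  ultimately show ?thesis using assms(1) unfolding clm_def by linarith
qed

lemma clm_union: assumes "finite A" "\<forall>a\<in>A. clm a Y" shows "rk indep (Y \<union> A) = rk indep Y"
  using assms
proof (induction A rule: finite_induct)
  case empty then show ?case by simp
next
  case (insert a A)
  have "clm a (Y \<union> A)" using insert.prems clm_mono by blast
  then show ?case using insert by (simp add: clm_def)
qed

lemma clm_trans: assumes "finite A" "\<forall>b\<in>A. clm b Y" "clm a A" shows "clm a Y"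
proof -
  have "clm a (Y \<union> A)" using assms(3) clm_mono by blast
  then have "rk indep (insert a (Y \<union> A)) = rk indep Y" using clm_union[OF assms(1,2)] by (simp add: clm_def)
  moreover have "rk indep (insert a Y) \<le> rk indep (insert a (Y \<union> A))" by (intro rk_mono) auto
  moreover have "rk indep Y \<le> rk indep (insert a Y)" by (intro rk_mono) auto
  ultimately show ?thesis by (simp add: clm_def)
qed

lemma basis_clm: assumes "indep J" "J \<subseteq> X" "card J = rk indep X" "x \<in> X" shows "clm x J"
proof -
  have "rk indep (insert x J) \<le> rk indep X" using assms by (intro rk_mono) auto
  moreover have "rk indep J \<le> rk indep (insert x J)" by (intro rk_mono) auto
  ultimately show ?thesis using assms rk_indep unfolding clm_def by simp
qed

lemma flat_insert: assumes "flat E indep F" "e \<in> E - F" "indep I" "I \<subseteq> F" "card I = rk indep F"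
  shows "indep (insert e I)"
proof -
  have lt: "rk indep F < rk indep (insert e F)" using assms(1,2) unfolding flat_def by blast
  obtain J where J: "I \<subseteq> J" "J \<subseteq> insert e F" "indep J" "card J = rk indep (insert e F)"
    using extend[of I "insert e F"] assms by blast
  have "e \<in> J"
  proof (rule ccontr)
    assume "e \<notin> J"
    then have "J \<subseteq> F" using J by blast
    then have "card J \<le> rk indep F" using rk_ge[OF J(3)] by blast
    then show False using lt J(4) by linarith
  qed
  then show ?thesis using J indep_subset by blast
qed

lemma flat_noloop: assumes "flat E indep F" "e \<in> E - F" shows "\<not> loop E indep e"
proof -
  obtain I where I: "I \<subseteq> F" "indep I" "card I = rk indep F" using rk_ex by blast
  then have "indep (insert e I)" using flat_insert assms by blast
  then show ?thesis unfolding loop_def using indep_subset by blast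
qed

lemma rk_le_clm: assumes "finite X" "\<forall>x\<in>X. clm x T" shows "rk indep X \<le> rk indep T"
  using clm_union[OF assms] rk_mono[of X "T \<union> X"] by simp

end

lemma rk_iso: assumes "matroid_iso f E1 i1 E2 i2" "X \<subseteq> E1"
  shows "rk i2 (f ` X) = rk i1 X"
proof -
  have bij: "bij_betw f E1 E2" and eq: "\<And>Y. Y \<subseteq> E1 \<Longrightarrow> i1 Y = i2 (f ` Y)"
    using assms(1) unfolding matroid_iso_def by auto
  have inj: "inj_on f E1" using bij bij_betw_def by blast
  have "{card I | I. I \<subseteq> X \<and> i1 I} = {card J | J. J \<subseteq> f ` X \<and> i2 J}"
  proof (intro set_eqI iffI)
    fix c assume "c \<in> {card I | I. I \<subseteq> X \<and> i1 I}"
    then obtain I where I: "I \<subseteq> X" "i1 I" "c = card I" by blast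
    then have "inj_on f I" using inj_on_subset[OF inj] assms(2) by blast
    then have "card (f ` I) = card I" by (rule card_image)
    moreover have "f ` I \<subseteq> f ` X" using I by blast
    moreover have "i2 (f ` I)" using I eq[of I] assms(2) by auto
    ultimately have "c = card (f ` I) \<and> f ` I \<subseteq> f ` X \<and> i2 (f ` I)" using I(3) by simp
    then show "c \<in> {card J | J. J \<subseteq> f ` X \<and> i2 J}" by blast
  next
    fix c assume "c \<in> {card J | J. J \<subseteq> f ` X \<and> i2 J}"
    then obtain J where J: "J \<subseteq> f ` X" "i2 J" "c = card J" by blast
    define I where "I = {x\<in>X. f x \<in> J}"
    have fI: "f ` I = J"
    proof
      show "f ` I \<subseteq> J" unfolding I_def by blast
      show "J \<subseteq> f ` I"
      proof
        fix y assume "y \<in> J"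
        then obtain x where "x \<in> X" "y = f x" using J(1) by blast
        then show "y \<in> f ` I" unfolding I_def using \<open>y \<in> J\<close> by blast
      qed
    qed
    have IX: "I \<subseteq> X" unfolding I_def by blast
    have injI: "inj_on f I" using inj_on_subset[OF inj] IX assms(2) by blast
    have "card (f ` I) = card I" using card_image[OF injI] .
    moreover have "i1 I" using eq[of I] assms(2) IX fI J(2) by simp
    ultimately have "c = card I \<and> I \<subseteq> X \<and> i1 I" using fI J(3) IX by simp
    then show "c \<in> {card I | I. I \<subseteq> X \<and> i1 I}" by blast
  qed
  then show ?thesis by (simp add: rk_def)
qed

lemma rk_restr: "X \<subseteq> S \<Longrightarrow> rk (restr i S) X = rk i X"
proof -
  assume "X \<subseteq> S"
  then have "{card I | I. I \<subseteq> X \<and> restr i S I} = {card I | I. I \<subseteq> X \<and> i I}"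
    unfolding restr_def by blast
  then show ?thesis by (simp add: rk_def)
qed

definition good :: "'a set \<Rightarrow> ('a set \<Rightarrow> bool) \<Rightarrow> 'a multiset \<Rightarrow> bool" where
  "good E indep \<alpha> \<longleftrightarrow> (\<forall>a\<in>#\<alpha>. \<not> loop E indep a)"

locale sp = mat E indep for E :: "'a set" and indep +
  fixes d :: nat and Ms :: "nat \<Rightarrow> 'a multiset set \<Rightarrow> bool" and F :: "'a set"
  assumes d1: "1 \<le> d" and qp: "sym_quasi_power E indep d Ms"
    and rkeq: "rk (Ms d) (Sym d E) = (rk indep E + d - 1) choose d"
    and fl: "flat E indep F"
begin

lemma msmat: "i \<in> {1..d} \<Longrightarrow> mat (Sym i E) (Ms i)"
  using qp unfolding sym_quasi_power_def mat_def by blast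

sublocale D: mat "Sym d E" "Ms d" using msmat d1 by simp

lemma QP: assumes "i \<in> {1..d}" "\<alpha> \<in> Sym (d - i) E"
  shows "(good E indep \<alpha> \<longrightarrow> matroid_iso ((+) \<alpha>) (Sym i E) (Ms i) {\<alpha> + \<beta> | \<beta>. \<beta> \<in> Sym i E}
            (restr (Ms d) {\<alpha> + \<beta> | \<beta>. \<beta> \<in> Sym i E}))
      \<and> (\<not> good E indep \<alpha> \<longrightarrow> rk (Ms d) {\<alpha> + \<beta> | \<beta>. \<beta> \<in> Sym i E} = 0)"
proof -
  have "let S = {\<alpha> + \<beta> | \<beta>. \<beta> \<in> Sym i E} in
        (if (\<forall>a\<in>#\<alpha>. \<not> loop E indep a)
         then matroid_iso (\<lambda>\<beta>. \<alpha> + \<beta>) (Sym i E) (Ms i) S (restr (Ms d) S)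
         else rk (Ms d) S = 0)"
    using qp assms unfolding sym_quasi_power_def by blast
  then show ?thesis unfolding Let_def good_def by (auto split: if_splits)
qed

lemma CR: assumes "i \<in> {1..d}" "\<alpha> \<in> Sym (d - i) E" "good E indep \<alpha>" "X \<subseteq> Sym i E"
  shows "rk (Ms d) ((+) \<alpha> ` X) = rk (Ms i) X"
proof -
  let ?S = "{\<alpha> + \<beta> | \<beta>. \<beta> \<in> Sym i E}"
  have iso: "matroid_iso ((+) \<alpha>) (Sym i E) (Ms i) ?S (restr (Ms d) ?S)" using QP assms by blast
  have "rk (restr (Ms d) ?S) ((+) \<alpha> ` X) = rk (Ms i) X" using rk_iso[OF iso assms(4)] .
  moreover have "(+) \<alpha> ` X \<subseteq> ?S" using assms(4) by blast
  then have "rk (restr (Ms d) ?S) ((+) \<alpha> ` X) = rk (Ms d) ((+) \<alpha> ` X)" by (rule rk_restr)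
  ultimately show ?thesis by simp
qed

lemma CR1: assumes "S \<subseteq> E" shows "rk (Ms 1) ((\<lambda>e. {#e#}) ` S) = rk indep S"
proof -
  have iso: "matroid_iso (\<lambda>e. {#e#}) E indep (Sym 1 E) (Ms 1)" using qp unfolding sym_quasi_power_def by blast
  show ?thesis using rk_iso[OF iso assms] .
qed

lemma single_Sym: "S \<subseteq> E \<Longrightarrow> (\<lambda>e. {#e#}) ` S \<subseteq> Sym 1 E"
  by (auto simp: Sym_def)

lemma mem_S1: "s \<in> E \<Longrightarrow> \<delta> + {#s#} \<in> {\<delta> + \<beta> | \<beta>. \<beta> \<in> Sym 1 E}"
proof -
  assume "s \<in> E"
  then have "{#s#} \<in> Sym 1 E" by (simp add: Sym_def)
  then show ?thesis by blast
qed

lemma img_S1: "T \<subseteq> E \<Longrightarrow> (\<lambda>s. \<delta> + {#s#}) ` T \<subseteq> {\<delta> + \<beta> | \<beta>. \<beta> \<in> Sym 1 E}"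
  by (rule image_subsetI) (rule mem_S1, blast)

lemma S1: assumes "\<delta> \<in> Sym (d - 1) E" "x \<in> E" "S \<subseteq> E" "clm x S"
  shows "D.clm (\<delta> + {#x#}) ((\<lambda>s. \<delta> + {#s#}) ` S)"
proof (cases "good E indep \<delta>")
  case True
  have e1: "insert (\<delta> + {#x#}) ((\<lambda>s. \<delta> + {#s#}) ` S) = (+) \<delta> ` ((\<lambda>e. {#e#}) ` insert x S)" by auto
  have e2: "(\<lambda>s. \<delta> + {#s#}) ` S = (+) \<delta> ` ((\<lambda>e. {#e#}) ` S)" by auto
  have i1: "1 \<in> {1..d}" using d1 by simp
  have "rk (Ms d) ((+) \<delta> ` ((\<lambda>e. {#e#}) ` insert x S)) = rk indep (insert x S)"
    using CR[OF i1 assms(1) True single_Sym[of "insert x S"]] CR1[of "insert x S"] assms by simp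
  moreover have "rk (Ms d) ((+) \<delta> ` ((\<lambda>e. {#e#}) ` S)) = rk indep S"
    using CR[OF i1 assms(1) True single_Sym[of "S"]] CR1[of "S"] assms by simp
  ultimately show ?thesis using assms(4) e1 e2 unfolding D.clm_def clm_def by simp
next
  case False
  let ?S = "{\<delta> + \<beta> | \<beta>. \<beta> \<in> Sym 1 E}"
  have i1: "1 \<in> {1..d}" using d1 by simp
  have z: "rk (Ms d) ?S = 0" using QP[OF i1 assms(1)] False by blast
  have "insert (\<delta> + {#x#}) ((\<lambda>s. \<delta> + {#s#}) ` S) = (\<lambda>s. \<delta> + {#s#}) ` (insert x S)" by simp
  also have "\<dots> \<subseteq> ?S" using assms(2,3) by (intro img_S1) simp
  finally have s1: "insert (\<delta> + {#x#}) ((\<lambda>s. \<delta> + {#s#}) ` S) \<subseteq> ?S" .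
  have a: "rk (Ms d) (insert (\<delta> + {#x#}) ((\<lambda>s. \<delta> + {#s#}) ` S)) = 0" using D.rk_mono[OF s1] z by simp
  have s2: "(\<lambda>s. \<delta> + {#s#}) ` S \<subseteq> ?S" using assms(3) by (rule img_S1)
  have b: "rk (Ms d) ((\<lambda>s. \<delta> + {#s#}) ` S) = 0" using D.rk_mono[OF s2] z by simp
  show ?thesis using a b unfolding D.clm_def by simp
qed


lemma Sym_mono: "B \<subseteq> E' \<Longrightarrow> Sym j B \<subseteq> Sym j E'"
  by (auto simp: Sym_def)

lemma span: assumes B: "B \<subseteq> E" "\<forall>x\<in>E. clm x B"
  shows "j \<le> d \<Longrightarrow> \<delta> \<in> Sym (d - j) E \<Longrightarrow> \<gamma> \<in> Sym j E \<Longrightarrow> D.clm (\<delta> + \<gamma>) ((+) \<delta> ` Sym j B)"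
proof (induction j arbitrary: \<delta> \<gamma>)
  case 0
  then have "\<gamma> = {#}" by (simp add: Sym_def)
  moreover have "{#} \<in> Sym 0 B" by (simp add: Sym_def)
  ultimately show ?case by (intro D.clm_mem) force
next
  case (Suc j)
  then obtain x where x: "x \<in># \<gamma>" by (cases \<gamma>) (auto simp: Sym_def)
  define \<gamma>0 where "\<gamma>0 = \<gamma> - {#x#}"
  have g: "\<gamma> = \<gamma>0 + {#x#}" using x \<gamma>0_def by simp
  have xE: "x \<in> E" using x Suc.prems by (auto simp: Sym_def)
  have g0: "\<gamma>0 \<in> Sym j E" using Suc.prems g by (auto simp: Sym_def)
  define \<delta>' where "\<delta>' = \<delta> + {#x#}"
  have d': "\<delta>' \<in> Sym (d - j) E" using Suc.prems xE by (auto simp: Sym_def \<delta>'_def)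
  have IH: "D.clm (\<delta>' + \<gamma>0) ((+) \<delta>' ` Sym j B)" using Suc.IH[OF _ d' g0] Suc.prems by simp
  have eq: "\<delta>' + \<gamma>0 = \<delta> + \<gamma>" using g \<delta>'_def by (simp add: ac_simps)
  have all: "\<forall>a\<in>(+) \<delta>' ` Sym j B. D.clm a ((+) \<delta> ` Sym (Suc j) B)"
  proof
    fix a assume "a \<in> (+) \<delta>' ` Sym j B"
    then obtain g' where g': "g' \<in> Sym j B" "a = \<delta>' + g'" by blast
    have d1': "\<delta> + g' \<in> Sym (d - 1) E" using g' Suc.prems B(1) by (auto simp: Sym_def)
    have "D.clm ((\<delta> + g') + {#x#}) ((\<lambda>s. (\<delta> + g') + {#s#}) ` B)"
      using S1[OF d1' xE B(1)] B(2) xE by blast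
    moreover have "(\<lambda>s. (\<delta> + g') + {#s#}) ` B \<subseteq> (+) \<delta> ` Sym (Suc j) B"
    proof
      fix y assume "y \<in> (\<lambda>s. (\<delta> + g') + {#s#}) ` B"
      then obtain s where s: "s \<in> B" "y = \<delta> + (g' + {#s#})" by (auto simp: ac_simps)
      have "g' + {#s#} \<in> Sym (Suc j) B" using s g' by (auto simp: Sym_def)
      then show "y \<in> (+) \<delta> ` Sym (Suc j) B" using s by blast
    qed
    ultimately have "D.clm ((\<delta> + g') + {#x#}) ((+) \<delta> ` Sym (Suc j) B)" using D.clm_mono by blast
    moreover have "a = (\<delta> + g') + {#x#}" using g' \<delta>'_def by (simp add: ac_simps)
    ultimately show "D.clm a ((+) \<delta> ` Sym (Suc j) B)" by simp
  qed
  have fin: "finite ((+) \<delta>' ` Sym j B)" using finite_Sym finE B(1) finite_subset by blast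
  show ?case using D.clm_trans[OF fin all IH] eq by simp
qed

lemma symB_indep: assumes "B \<subseteq> E" "indep B" "card B = rk indep E" shows "Ms d (Sym d B)"
proof -
  have sp: "\<forall>x\<in>E. clm x B" using basis_clm assms by blast
  have "\<forall>x\<in>Sym d E. D.clm x (Sym d B)"
  proof
    fix x assume "x \<in> Sym d E"
    then have "D.clm ({#} + x) ((+) {#} ` Sym d B)"
      using span[OF assms(1) sp, of d "{#}" x] by (simp add: Sym_def)
    then show "D.clm x (Sym d B)" by simp
  qed
  then have "rk (Ms d) (Sym d E) \<le> rk (Ms d) (Sym d B)" using D.rk_le_clm finite_Sym finE by blast
  moreover have fB: "finite B" using assms(1) finE finite_subset by blast
  moreover have "rk (Ms d) (Sym d B) \<le> card (Sym d B)" using D.rk_le_card finite_Sym fB by blast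
  moreover have "card (Sym d B) = rk (Ms d) (Sym d E)" using card_Sym[OF fB] rkeq assms(3) by simp
  ultimately show ?thesis using D.rk_card_indep finite_Sym by (metis le_antisym)
qed

lemma indep_noloop: "indep B \<Longrightarrow> e \<in> B \<Longrightarrow> \<not> loop E indep e"
  unfolding loop_def using indep_subset by blast

lemma Cind: assumes "B \<subseteq> E" "indep B" "card B = rk indep E" "e \<in> B" "i \<in> {1..d}"
  "\<alpha> \<in> Sym (d - i) E" "good E indep \<alpha>"
  shows "Ms d ((+) \<alpha> ` Sym i B)"
proof -
  define \<beta>0 where "\<beta>0 = replicate_mset (d - i) e"
  have b0: "\<beta>0 \<in> Sym (d - i) E" using assms(1,4) by (auto simp: Sym_def \<beta>0_def)
  have gb0: "good E indep \<beta>0" using indep_noloop assms(2,4) by (simp add: good_def \<beta>0_def)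
  have sub: "Sym i B \<subseteq> Sym i E" using Sym_mono assms(1) by blast
  have fB: "finite B" using assms(1) finE finite_subset by blast
  have "(+) \<beta>0 ` Sym i B \<subseteq> Sym d B" using assms(4,5) by (auto simp: Sym_def \<beta>0_def split: if_splits)
  then have ind0: "Ms d ((+) \<beta>0 ` Sym i B)" using D.indep_subset symB_indep assms(1-3) by blast
  have "rk (Ms d) ((+) \<alpha> ` Sym i B) = rk (Ms i) (Sym i B)" using CR assms sub by blast
  also have "\<dots> = rk (Ms d) ((+) \<beta>0 ` Sym i B)" using CR[OF assms(5) b0 gb0 sub] by simp
  also have "\<dots> = card ((+) \<beta>0 ` Sym i B)" using D.rk_indep ind0 by blast
  also have "\<dots> = card (Sym i B)" by (rule card_image, rule inj_onI) simp
  also have "\<dots> = card ((+) \<alpha> ` Sym i B)" by (rule card_image[symmetric], rule inj_onI) simp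
  finally have rc: "rk (Ms d) ((+) \<alpha> ` Sym i B) = card ((+) \<alpha> ` Sym i B)" .
  have "finite ((+) \<alpha> ` Sym i B)" using finite_Sym[OF fB] by blast
  then show ?thesis using rc by (rule D.rk_card_indep)
qed


lemma good_of: "set_mset \<alpha> \<subseteq> E - F \<Longrightarrow> good E indep \<alpha>"
  using flat_noloop[OF fl] by (auto simp: good_def)

lemma claim: "k \<le> d \<Longrightarrow> \<alpha> \<in> Sym (d - k) E \<Longrightarrow> set_mset \<alpha> \<subseteq> E - F \<Longrightarrow>
  \<beta> \<in> Sym k E \<Longrightarrow> set_mset \<beta> \<subseteq> E - F \<Longrightarrow>
  rk (Ms d) ((+) \<alpha> ` FSym F k E) < rk (Ms d) (insert (\<alpha> + \<beta>) ((+) \<alpha> ` FSym F k E))"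
proof (induction k arbitrary: \<alpha> \<beta>)
  case 0
  have F0: "FSym F 0 E = {}" by (auto simp: FSym_def Sym_def)
  have b: "\<beta> = {#}" using 0 by (simp add: Sym_def)
  have "\<alpha> \<noteq> {#}" using 0 d1 by (auto simp: Sym_def)
  then obtain a where a: "a \<in># \<alpha>" by (cases \<alpha>) auto
  define \<alpha>0 where "\<alpha>0 = \<alpha> - {#a#}"
  have ae: "\<alpha> = \<alpha>0 + {#a#}" using a \<alpha>0_def by simp
  have aE: "a \<in> E - F" using a 0 by auto
  have a0: "\<alpha>0 \<in> Sym (d - 1) E" using 0 ae by (auto simp: Sym_def)
  have g0: "good E indep \<alpha>0" using good_of 0 ae by auto
  have i1: "1 \<in> {1..d}" using d1 by simp
  have ia: "indep {a}" using flat_noloop[OF fl aE] aE unfolding loop_def by blast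
  have "{\<alpha>} = (+) \<alpha>0 ` ((\<lambda>e. {#e#}) ` {a})" using ae by simp
  then have "rk (Ms d) {\<alpha>} = rk indep {a}"
    using CR[OF i1 a0 g0 single_Sym[of "{a}"]] CR1[of "{a}"] aE by simp
  also have "\<dots> = 1" using rk_indep[OF ia] by simp
  finally have "rk (Ms d) {\<alpha>} = 1" .
  moreover have "rk (Ms d) {} = 0" using D.rk_le_card by (metis card.empty finite.emptyI le_zero_eq)
  ultimately show ?case using F0 b by simp
next
  case (Suc k)
  then obtain e where e: "e \<in># \<beta>" by (cases \<beta>) (auto simp: Sym_def)
  define \<beta>' where "\<beta>' = \<beta> - {#e#}"
  have be: "\<beta> = \<beta>' + {#e#}" using e \<beta>'_def by simp
  define \<alpha>' where "\<alpha>' = \<alpha> + {#e#}"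
  have eEF: "e \<in> E - F" using e Suc.prems by auto
  have ha': "\<alpha>' \<in> Sym (d - k) E" "set_mset \<alpha>' \<subseteq> E - F" using Suc.prems eEF by (auto simp: Sym_def \<alpha>'_def)
  have hb': "\<beta>' \<in> Sym k E" "set_mset \<beta>' \<subseteq> E - F" using Suc.prems be by (auto simp: Sym_def)
  define Z where "Z = (+) \<alpha>' ` FSym F k E"
  define X where "X = (+) \<alpha> ` FSym F (Suc k) E"
  define U where "U = (+) \<alpha>' ` Sym k E"
  define m where "m = \<alpha> + \<beta>"
  have m': "m = \<alpha>' + \<beta>'" using be by (simp add: m_def \<alpha>'_def ac_simps)
  have IH: "rk (Ms d) Z < rk (Ms d) (insert m Z)"
    using Suc.IH[OF _ ha' hb'] Suc.prems m' Z_def by simp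
  have ZX: "Z \<subseteq> X"
  proof
    fix z assume "z \<in> Z"
    then obtain \<gamma> where g: "\<gamma> \<in> FSym F k E" "z = \<alpha>' + \<gamma>" using Z_def by blast
    have "\<gamma> + {#e#} \<in> FSym F (Suc k) E" using g eEF by (auto simp: FSym_def Sym_def)
    moreover have "z = \<alpha> + (\<gamma> + {#e#})" using g by (simp add: \<alpha>'_def ac_simps)
    ultimately show "z \<in> X" using X_def by blast
  qed
  have ZU: "Z \<subseteq> U" using Z_def U_def by (auto simp: FSym_def)
  have XU: "X \<inter> U \<subseteq> Z"
  proof
    fix x assume "x \<in> X \<inter> U"
    then obtain \<delta> \<gamma> where dg: "\<delta> \<in> FSym F (Suc k) E" "\<gamma> \<in> Sym k E" "x = \<alpha> + \<delta>" "x = \<alpha>' + \<gamma>"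
      using X_def U_def by blast
    have "\<delta> = \<gamma> + {#e#}" using dg by (simp add: \<alpha>'_def ac_simps)
    moreover obtain f where f: "f \<in> F" "f \<in># \<delta>" using dg by (auto simp: FSym_def)
    ultimately have "f \<in># \<gamma>" using eEF by auto
    then have "\<gamma> \<in> FSym F k E" using f dg by (auto simp: FSym_def)
    then show "x \<in> Z" using dg Z_def by blast
  qed
  have XUZ: "X \<inter> U = Z" using XU ZX ZU by blast
  have mU: "m \<in> U" using m' hb' U_def by blast
  have sm: "rk (Ms d) (X \<union> U) + rk (Ms d) (insert m Z) \<le> rk (Ms d) (insert m X) + rk (Ms d) U"
  proof -
    have "insert m X \<union> U = X \<union> U" using mU by blast
    moreover have "insert m X \<inter> U = insert m Z" using mU XUZ by blast
    ultimately show ?thesis using D.submod[of "insert m X" U] by simp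
  qed
  have key: "rk (Ms d) X + rk (Ms d) U \<le> rk (Ms d) (X \<union> U) + rk (Ms d) Z"
  proof -
    obtain BF where BF: "BF \<subseteq> F" "indep BF" "card BF = rk indep F" using rk_ex by blast
    have FE: "F \<subseteq> E" using fl by (simp add: flat_def)
    have "indep (insert e BF)" using flat_insert[OF fl eEF BF(2,1,3)] .
    then obtain B where B: "insert e BF \<subseteq> B" "B \<subseteq> E" "indep B" "card B = rk indep E"
      using extend[of "insert e BF" E] indep_sub by blast
    have Bsp: "\<forall>x\<in>E. clm x B" using basis_clm B by blast
    have BFsp: "\<forall>x\<in>F. clm x BF" using basis_clm BF by blast
    have iS: "Suc k \<in> {1..d}" using Suc.prems by simp
    have ga: "good E indep \<alpha>" using good_of Suc.prems by blast
    define C where "C = (+) \<alpha> ` Sym (Suc k) B"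
    have Ci: "Ms d C" using Cind[OF B(2,3,4) _ iS Suc.prems(2) ga] B(1) C_def by blast
    have fin: "\<And>j. finite (Sym j E)" using finite_Sym finE by blast
    have fB: "finite B" using B(2) finE finite_subset by blast
    have fC: "finite C" using C_def finite_Sym fB by blast
    have fX: "finite X" using X_def fin by (auto simp: FSym_def)
    have fU: "finite U" using U_def fin by blast
    have hX: "\<forall>x\<in>X. D.clm x (C \<inter> X)"
    proof
      fix x assume "x \<in> X"
      then obtain \<delta> where dl: "\<delta> \<in> FSym F (Suc k) E" "x = \<alpha> + \<delta>" using X_def by blast
      then obtain f where f: "f \<in> F" "f \<in># \<delta>" by (auto simp: FSym_def)
      define \<delta>0 where "\<delta>0 = \<delta> - {#f#}"
      have de: "\<delta> = \<delta>0 + {#f#}" using f \<delta>0_def by simp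
      have d0: "\<delta>0 \<in> Sym k E" using dl de by (auto simp: FSym_def Sym_def)
      have af: "\<alpha> + {#f#} \<in> Sym (d - k) E" using Suc.prems f FE by (auto simp: Sym_def)
      have c1: "D.clm (\<alpha> + {#f#} + \<delta>0) ((+) (\<alpha> + {#f#}) ` Sym k B)"
        using span[OF B(2) Bsp _ af d0] Suc.prems by simp
      have all: "\<forall>a\<in>(+) (\<alpha> + {#f#}) ` Sym k B. D.clm a (C \<inter> X)"
      proof
        fix a assume "a \<in> (+) (\<alpha> + {#f#}) ` Sym k B"
        then obtain g where g: "g \<in> Sym k B" "a = \<alpha> + {#f#} + g" by blast
        have d1': "\<alpha> + g \<in> Sym (d - 1) E" using g Suc.prems B(2) by (auto simp: Sym_def)
        have "D.clm ((\<alpha> + g) + {#f#}) ((\<lambda>s. (\<alpha> + g) + {#s#}) ` BF)"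
          using S1[OF d1' _ _ ] f FE BF(1) BFsp by blast
        moreover have "(\<lambda>s. (\<alpha> + g) + {#s#}) ` BF \<subseteq> C \<inter> X"
        proof
          fix y assume "y \<in> (\<lambda>s. (\<alpha> + g) + {#s#}) ` BF"
          then obtain s where s: "s \<in> BF" "y = \<alpha> + (g + {#s#})" by (auto simp: ac_simps)
          have "g + {#s#} \<in> Sym (Suc k) B" using s g B(1) by (auto simp: Sym_def)
          moreover have "g + {#s#} \<in> FSym F (Suc k) E" using s g B BF(1) by (auto simp: Sym_def FSym_def)
          ultimately show "y \<in> C \<inter> X" using s C_def X_def by blast
        qed
        ultimately have "D.clm ((\<alpha> + g) + {#f#}) (C \<inter> X)" using D.clm_mono by blast
        then show "D.clm a (C \<inter> X)" using g by (simp add: ac_simps)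
      qed
      have finA: "finite ((+) (\<alpha> + {#f#}) ` Sym k B)" using finite_Sym fB by blast
      have "x = \<alpha> + {#f#} + \<delta>0" using dl de by (simp add: ac_simps)
      then show "D.clm x (C \<inter> X)" using D.clm_trans[OF finA all] c1 by simp
    qed
    have hU: "\<forall>u\<in>U. D.clm u (C \<inter> U)"
    proof
      fix u assume "u \<in> U"
      then obtain \<gamma> where g: "\<gamma> \<in> Sym k E" "u = \<alpha>' + \<gamma>" using U_def by blast
      have c1: "D.clm u ((+) \<alpha>' ` Sym k B)" using span[OF B(2) Bsp _ ha'(1) g(1)] Suc.prems g by simp
      have "(+) \<alpha>' ` Sym k B \<subseteq> C \<inter> U"
      proof
        fix y assume "y \<in> (+) \<alpha>' ` Sym k B"
        then obtain g' where g0: "g' \<in> Sym k B" "y = \<alpha>' + g'" by blast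
        then have g': "g' \<in> Sym k B" "y = \<alpha> + (g' + {#e#})" by (auto simp: \<alpha>'_def ac_simps)
        have "g' + {#e#} \<in> Sym (Suc k) B" using g' B(1) by (auto simp: Sym_def)
        moreover have "g' \<in> Sym k E" using g0(1) Sym_mono[OF B(2)] by blast
        then have "y \<in> U" using g0(2) U_def by blast
        ultimately show "y \<in> C \<inter> U" using g' C_def by blast
      qed
      then show "D.clm u (C \<inter> U)" using c1 D.clm_mono by blast
    qed
    have fCX: "finite (C \<inter> X)" "finite (C \<inter> U)" using fC by auto
    have r1a: "rk (Ms d) X \<le> rk (Ms d) (C \<inter> X)" by (rule D.rk_le_clm[OF fX hX])
    have r1b: "rk (Ms d) (C \<inter> X) \<le> card (C \<inter> X)" by (rule D.rk_le_card[OF fCX(1)])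
    have r2a: "rk (Ms d) U \<le> rk (Ms d) (C \<inter> U)" by (rule D.rk_le_clm[OF fU hU])
    have r2b: "rk (Ms d) (C \<inter> U) \<le> card (C \<inter> U)" by (rule D.rk_le_card[OF fCX(2)])
    have i3: "Ms d ((C \<inter> X) \<union> (C \<inter> U))" by (rule D.indep_subset[OF Ci]) blast
    have r3: "card ((C \<inter> X) \<union> (C \<inter> U)) \<le> rk (Ms d) (X \<union> U)"
      by (rule D.rk_ge[OF i3]) blast
    have i4: "Ms d (C \<inter> Z)" by (rule D.indep_subset[OF Ci]) blast
    have r4: "card (C \<inter> Z) \<le> rk (Ms d) Z" by (rule D.rk_ge[OF i4]) blast
    note r1 = order_trans[OF r1a r1b] and r2 = order_trans[OF r2a r2b]
    have "(C \<inter> X) \<inter> (C \<inter> U) = C \<inter> Z" using XUZ by blast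
    then have "card (C \<inter> X) + card (C \<inter> U) = card ((C \<inter> X) \<union> (C \<inter> U)) + card (C \<inter> Z)"
      using card_Un_Int[of "C \<inter> X" "C \<inter> U"] fC by simp
    then show ?thesis using r1 r2 r3 r4 by linarith
  qed
  have "rk (Ms d) X < rk (Ms d) (insert m X)" using IH sm key by linarith
  then show ?case unfolding X_def m_def .
qed

theorem main: "flat (Sym d E) (Ms d) (FSym F d E)"
  unfolding flat_def
proof (intro conjI ballI)
  show "FSym F d E \<subseteq> Sym d E" by (auto simp: FSym_def)
next
  fix m assume m: "m \<in> Sym d E - FSym F d E"
  have "set_mset m \<subseteq> E - F" using m by (auto simp: FSym_def Sym_def)
  moreover have "{#} \<in> Sym (d - d) E" by (simp add: Sym_def)
  ultimately have "rk (Ms d) ((+) {#} ` FSym F d E) < rk (Ms d) (insert ({#} + m) ((+) {#} ` FSym F d E))"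
    using claim[of d "{#}" m] m by simp
  then show "rk (Ms d) (FSym F d E) < rk (Ms d) (insert m (FSym F d E))" by simp
qed

end


theorem proposition2p19:
  fixes E :: "'a set" and indep :: "'a set \<Rightarrow> bool"
    and d :: nat and Ms :: "nat \<Rightarrow> 'a multiset set \<Rightarrow> bool" and F :: "'a set"
  assumes "matroid E indep"
    and "1 \<le> d"
    and "sym_power E indep d Ms"
    and "flat E indep F"
  shows "flat (Sym d E) (Ms d) (FSym F d E)"
proof -
  have "sp E indep d Ms F"
    using assms unfolding sp_def sp_axioms_def mat_def sym_power_def by blast
  then interpret sp E indep d Ms F .
  show ?thesis by (rule main)
qed

end
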